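(* For all real numbers $a,b$ with $-1\le a<1$ and $0<b<1$, $$\int_0^\infty\frac{\sinh(bt)}{\cosh(t)-a}\,\mathrm{d}t>-\frac{2b}{1+a}\log\Big(\frac12(1-a)\Big).$$ *)

theory Defs
  imports "HOL-Analysis.Analysis"
begin

text \<open>Right-hand side of the bound, -(2b/(1+a)) log((1-a)/2); at a = -1 the
expression is of the form 0/0 and is interpreted by its continuous extension, b.\<close>
definition C1_bound :: "real \<Rightarrow> real \<Rightarrow> real" where
  "C1_bound a b = (if a = -1 then b else - (2 * b / (1 + a)) * ln ((1 - a) / 2))"

end

theory Submission
  imports Defs "HOL-Real_Asymp.Real_Asymp"
begin

lemma gen_bound:
  fixes f g G :: "real \<Rightarrow> real"
  assumes cf: "continuous_on {0..} f" and cg: "continuous_on {0..} g"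
  and fint: "f integrable_on {0..}"
  and f0: "\<And>t. t \<ge> 0 \<Longrightarrow> f t \<ge> 0"
  and fg: "\<And>t. t \<ge> 0 \<Longrightarrow> g t \<le> f t"
  and fg1: "g 1 < f 1"
  and G: "\<And>t. t \<ge> 0 \<Longrightarrow> (G has_real_derivative g t) (at t)"
  and lim: "(G \<longlongrightarrow> 0) at_top"
  shows "integral {0..} f > - G 0"
proof -
  define h where "h t = f t - g t" for t
  have ch: "continuous_on {0..} h" unfolding h_def by (intro continuous_intros cf cg)
  have hint: "h integrable_on {0..T}" for T
    by (rule integrable_continuous_interval) (rule continuous_on_subset[OF ch], auto)
  have fintT: "f integrable_on {0..T}" for T
    by (rule integrable_continuous_interval) (rule continuous_on_subset[OF cf], auto)
  define \<delta> where "\<delta> = integral {0..1} h"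
  have "\<delta> \<ge> 0" unfolding \<delta>_def
    by (rule integral_nonneg[OF hint]) (auto simp: h_def fg)
  moreover have "\<delta> \<noteq> 0"
  proof
    assume "\<delta> = 0"
    then have "(h has_integral 0) (cbox 0 1)"
      using hint[of 1] unfolding \<delta>_def by (simp add: has_integral_integral)
    then have "h 1 = 0"
      by (intro has_integral_0_cbox_imp_0[of 0 1 h])
         (use continuous_on_subset[OF ch, of "cbox 0 1"] in \<open>auto simp: h_def fg\<close>)
    then show False using fg1 by (simp add: h_def)
  qed
  ultimately have dpos: "\<delta> > 0" by simp
  have ev: "\<forall>\<^sub>F T in at_top. G T - G 0 + \<delta> \<le> integral {0..} f"
    using eventually_ge_at_top[of 1]
  proof eventually_elim
    case (elim T)
    have gT: "(g has_integral (G T - G 0)) {0..T}"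
      apply (rule fundamental_theorem_of_calculus)
      using elim apply simp
      apply (rule has_real_derivative_iff_has_vector_derivative[THEN iffD1])
      apply (rule DERIV_subset[OF G]) by auto
    have "integral {0..1} h \<le> integral {0..T} h"
      by (rule integral_subset_le) (use elim hint in \<open>auto simp: h_def fg\<close>)
    moreover have "integral {0..T} h = integral {0..T} f - (G T - G 0)"
      unfolding h_def using integral_diff[OF fintT has_integral_integrable[OF gT]]
        integral_unique[OF gT] by simp
    moreover have "integral {0..T} f \<le> integral {0..} f"
      by (rule integral_subset_le) (use fintT fint f0 in auto)
    ultimately show ?case unfolding \<delta>_def by simp
  qed
  have tl: "((\<lambda>T. G T - G 0 + \<delta>) \<longlongrightarrow> 0 - G 0 + \<delta>) at_top"
    by (intro tendsto_intros lim)
  have "0 - G 0 + \<delta> \<le> integral {0..} f"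
    using tendsto_le[OF _ tendsto_const tl ev] by simp
  then show ?thesis using dpos by simp
qed

lemma sinh_lower:
  fixes b t :: real
  assumes "0 < b" "0 < t"
  shows "2 * b * sinh t / (cosh t + 1) < sinh (b * t)"
proof -
  define \<phi> where "\<phi> x = sinh (b * x) - 2 * b * sinh x / (cosh x + 1)" for x
  have cpos: "cosh x + 1 > 0" for x :: real
    using cosh_real_ge_1[of x] by linarith
  have cne: "cosh x + 1 \<noteq> 0" for x :: real using cpos[of x] by simp
  have der: "(\<phi> has_real_derivative (b * cosh (b * x) - 2 * b / (cosh x + 1))) (at x)" for x
  proof -
    have "(\<phi> has_real_derivative (cosh (b * x) * b -
        (2 * b * cosh x * (cosh x + 1) - 2 * b * sinh x * sinh x) / (cosh x + 1)^2)) (at x)"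
      unfolding \<phi>_def using cpos[of x]
      by (auto intro!: derivative_eq_intros simp: power2_eq_square)
    moreover have "(2 * b * cosh x * (cosh x + 1) - 2 * b * sinh x * sinh x) / (cosh x + 1)^2
        = 2 * b / (cosh x + 1)"
    proof -
      have e: "cosh x * cosh x - sinh x * sinh x = 1"
        using cosh_square_eq[of x] by (simp add: power2_eq_square)
      have "2 * b * cosh x * (cosh x + 1) - 2 * b * sinh x * sinh x
          = 2 * b * (cosh x * cosh x - sinh x * sinh x) + 2 * b * cosh x"
        by (simp add: algebra_simps)
      also have "\<dots> = 2 * b * (cosh x + 1)" using e by (simp add: algebra_simps)
      finally have "2 * b * cosh x * (cosh x + 1) - 2 * b * sinh x * sinh x = 2 * b * (cosh x + 1)" .
      then show ?thesis using cpos[of x] by (simp add: power2_eq_square)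
    qed
    ultimately show ?thesis by (simp add: mult.commute)
  qed
  have "\<phi> 0 < \<phi> t"
  proof (rule DERIV_pos_imp_increasing_open[OF assms(2)])
    fix x :: real assume x: "0 < x" "x < t"
    have "cosh x > 1" using x cosh_real_ge_1[of x] cosh_real_one_iff[of x] by linarith
    then have "2 / (cosh x + 1) < 1" by (simp add: field_simps)
    moreover have "1 \<le> cosh (b * x)" by (rule cosh_real_ge_1)
    have "b * cosh (b * x) - 2 * b / (cosh x + 1) > 0"
    proof -
      have "b * (2 / (cosh x + 1)) < b * 1" using assms(1) \<open>2 / (cosh x + 1) < 1\<close>
        by (rule mult_strict_left_mono[rotated])
      moreover have "b * 1 \<le> b * cosh (b * x)" using assms(1) \<open>1 \<le> cosh (b * x)\<close>
        by (intro mult_left_mono) auto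
      ultimately show ?thesis by (simp add: mult.commute)
    qed
    then show "\<exists>y. (\<phi> has_real_derivative y) (at x) \<and> 0 < y" using der by blast
  next
    show "continuous_on {0..t} \<phi>" unfolding \<phi>_def using cpos
      by (intro continuous_intros) (use cne in auto)
  qed
  then show ?thesis by (simp add: \<phi>_def)
qed

theorem lemmaC1:
  fixes a b :: real
  assumes "-1 \<le> a" "a < 1" "0 < b" "b < 1"
  shows "(\<lambda>t. sinh (b * t) / (cosh t - a)) integrable_on {0..}
         \<and> integral {0..} (\<lambda>t. sinh (b * t) / (cosh t - a)) > C1_bound a b"
proof -
  define f where "f t = sinh (b * t) / (cosh t - a)" for t
  define g where "g t = 2 * b * sinh t / ((cosh t + 1) * (cosh t - a))" for t
  have dpos: "cosh t - a > 0" for t using cosh_real_ge_1[of t] assms(2) by linarith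
  have cpos: "cosh t + 1 > 0" for t :: real using cosh_real_ge_1[of t] by linarith
  have cf: "continuous_on {0..} f" unfolding f_def using dpos
    by (intro continuous_intros) (auto simp: less_le)
  have cg: "continuous_on {0..} g" unfolding g_def using dpos cpos
    by (intro continuous_intros) (auto simp: less_le)
  have f0: "f t \<ge> 0" if "t \<ge> 0" for t
    unfolding f_def using dpos[of t] that assms(3) by simp
  have fgs: "g t < f t" if "t > 0" for t
  proof -
    have "g t = (2 * b * sinh t / (cosh t + 1)) / (cosh t - a)" unfolding g_def by simp
    also have "\<dots> < sinh (b * t) / (cosh t - a)"
      by (rule divide_strict_right_mono[OF sinh_lower[OF assms(3) that] dpos])
    finally show ?thesis unfolding f_def .
  qed
  have fg: "g t \<le> f t" if "t \<ge> 0" for t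
    using fgs[of t] that by (cases "t = 0") (auto simp: f_def g_def)
  define c where "c = min 1 (1 - a)"
  have c: "c > 0" using assms unfolding c_def by simp
  have cle: "c * cosh t \<le> cosh t - a" for t
  proof (cases "a \<ge> 0")
    case True
    have "a \<le> a * cosh t" using True cosh_real_ge_1[of t] by (simp add: mult_le_cancel_left1)
    then have "(1 - a) * cosh t \<le> cosh t - a" by (simp add: algebra_simps)
    moreover have "c * cosh t \<le> (1 - a) * cosh t" unfolding c_def
      using cosh_real_ge_1[of t] by (intro mult_right_mono) auto
    ultimately show ?thesis by linarith
  next
    case False
    have "c * cosh t \<le> 1 * cosh t" unfolding c_def
      using cosh_real_ge_1[of t] by (intro mult_right_mono) auto
    then show ?thesis using False by linarith
  qed
  have fint: "f integrable_on {0..}"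
  proof (rule measurable_bounded_by_integrable_imp_integrable)
    show "f \<in> borel_measurable (lebesgue_on {0..})"
      by (rule continuous_imp_measurable_on_sets_lebesgue[OF cf])
         (rule lebesgue_closedin[of UNIV], auto simp: closedin_closed intro!: exI[of _ "{0..}"])
    show "(\<lambda>t. exp (- (1 - b) * t) / c) integrable_on {0..}"
      using integrable_on_exp_minus_to_infinity[of "1 - b" 0] assms(4)
      by (intro integrable_on_divide) simp
    show "{0::real..} \<in> sets lebesgue"
      by (rule lebesgue_closedin[of UNIV], auto simp: closedin_closed closed_atLeast intro!: exI[of _ "{0..}"])
    fix t :: real assume t: "t \<in> {0..}"
    have "norm (f t) = f t" using f0 t by simp
    also have "\<dots> \<le> sinh (b * t) / (c * cosh t)" unfolding f_def
      using t assms(3) c cle[of t] dpos[of t] cosh_real_ge_1[of t] by (intro divide_left_mono) (auto intro!: mult_pos_pos)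
    also have "\<dots> \<le> (exp (b * t) / 2) / (c * (exp t / 2))"
    proof (intro frac_le)
      show "0 \<le> exp (b * t) / 2" by simp
      show "sinh (b * t) \<le> exp (b * t) / 2" by (simp add: sinh_def)
      show "0 < c * (exp t / 2)" using c by simp
      show "c * (exp t / 2) \<le> c * cosh t" using c by (intro mult_left_mono) (auto simp: cosh_def)
    qed
    also have "\<dots> = exp (- (1 - b) * t) / c"
      using c by (simp add: field_simps exp_add[symmetric] exp_diff)
    finally show "norm (f t) \<le> exp (- (1 - b) * t) / c" .
  qed
  have fg1: "g 1 < f 1" by (rule fgs) simp
  have main: "integral {0..} f > C1_bound a b"
  proof (cases "a = -1")
    case True
    define G where "G t = - 2 * b / (cosh t + 1)" for t
    have "integral {0..} f > - G 0"
    proof (rule gen_bound[OF cf cg fint f0 fg fg1])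
      fix t :: real assume "t \<ge> 0"
      show "(G has_real_derivative g t) (at t)"
        unfolding G_def g_def True using cpos[of t]
        by (auto intro!: derivative_eq_intros simp: power2_eq_square)
    next
      show "(G \<longlongrightarrow> 0) at_top" unfolding G_def cosh_def real_scaleR_def by real_asymp
    qed
    then show ?thesis using True by (simp add: G_def C1_bound_def)
  next
    case False
    then have ap: "1 + a > 0" using assms(1) by simp
    define G where "G t = 2 * b / (1 + a) * (ln (cosh t - a) - ln (cosh t + 1))" for t
    have "integral {0..} f > - G 0"
    proof (rule gen_bound[OF cf cg fint f0 fg fg1])
      fix t :: real assume "t \<ge> 0"
      have "(G has_real_derivative 2 * b / (1 + a) * (sinh t / (cosh t - a) - sinh t / (cosh t + 1))) (at t)"
        unfolding G_def using cpos[of t] dpos[of t] ap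
        by (auto intro!: derivative_eq_intros)
      moreover have "2 * b / (1 + a) * (sinh t / (cosh t - a) - sinh t / (cosh t + 1)) = g t"
      proof -
        have "sinh t / (cosh t - a) - sinh t / (cosh t + 1)
            = sinh t * (1 + a) / ((cosh t + 1) * (cosh t - a))"
          using cpos[of t] dpos[of t] by (simp add: field_simps)
        then show ?thesis unfolding g_def using ap by simp
      qed
      ultimately show "(G has_real_derivative g t) (at t)" by simp
    next
      have "((\<lambda>t. ln (cosh t - a) - ln (cosh t + 1)) \<longlongrightarrow> 0) at_top"
        unfolding cosh_def real_scaleR_def using assms(2) by real_asymp
      then have "((\<lambda>t. 2 * b / (1 + a) * (ln (cosh t - a) - ln (cosh t + 1))) \<longlongrightarrow> 2 * b / (1 + a) * 0) at_top"
        by (intro tendsto_intros)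
      then show "(G \<longlongrightarrow> 0) at_top" unfolding G_def by simp
    qed
    moreover have "- G 0 = C1_bound a b"
    proof -
      have l: "ln ((1 - a) / 2) = ln (1 - a) - ln 2"
        using assms(2) by (intro ln_divide_pos) auto
      have "cosh 0 + 1 = (2::real)" by simp
      then have "- G 0 = - (2 * b / (1 + a)) * (ln (1 - a) - ln 2)"
        unfolding G_def by simp
      also have "\<dots> = C1_bound a b" unfolding C1_bound_def l using False by simp
      finally show ?thesis .
    qed
    ultimately show ?thesis by simp
  qed
  show ?thesis using fint main unfolding f_def by simp
qed

end
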